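(* Let $m\ge1$ be an integer and for each $s\in(0,m)$ let $\sigma_s$ be a Borel probability measure on $\mathbb S^{N-1}$. Then for every $\beta\in(0,1)$ and every $u\in C^\beta_c(\mathbb R^N)$ (compactly supported $\beta$-Hölder continuous function), $$\lim_{s\to0^+}L_{m,s}u(x)=u(x)\qquad\text{for all }x\in\mathbb R^N.$$
   Context: $\nu_s(U)=\int_0^\infty\int_{\mathbb S^{N-1}}\chi_U(r\theta)r^{-1-2s}\sigma_s(d\theta)\,dr$; $M_{s,\sigma}(e)=\int|e\cdot\theta|^{2s}\sigma(d\theta)$; $e_s$ is a maximum point of $M_{s,\sigma_s}$; for an integer $m>s$, $c_{m,s}>0$ is defined by $\frac2{c_{m,s}}=2^m\int(1-\cos(e_s\cdot y))^m\nu_s(dy)$; $\delta_mu(x,y)=\sum_{k=-m}^m(-1)^k\binom{2m}{m-k}u(x+ky)$; $L_{m,s}u(x)=\frac{c_{m,s}}2\int_{\mathbb R^N}\delta_mu(x,y)\,\nu_s(dy)$. *)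

theory Defs
  imports "HOL-Probability.Probability"
begin

text \<open>The L\'evy measure nu_s on R^N: the push-forward of
  (r^(-1-2s) dr on (0,inf)) x sigma_s under (r,theta) |-> r theta, so that
  nu_s(U) = int_0^inf int_S chi_U(r theta) r^(-1-2s) sigma_s(d theta) dr.\<close>
definition nu_meas :: "'a::euclidean_space measure \<Rightarrow> real \<Rightarrow> 'a measure" where
  "nu_meas \<sigma> s =
     distr ((density lborel (\<lambda>r::real. indicator {0<..} r * ennreal (r powr (-1 - 2 * s)))) \<Otimes>\<^sub>M \<sigma>)
           borel (\<lambda>(r, \<theta>). r *\<^sub>R \<theta>)"

definition M_fun :: "real \<Rightarrow> 'a::euclidean_space measure \<Rightarrow> 'a \<Rightarrow> real" where
  "M_fun s \<sigma> e = (\<integral>\<theta>. \<bar>e \<bullet> \<theta>\<bar> powr (2 * s) \<partial>\<sigma>)"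

definition c_const :: "nat \<Rightarrow> real \<Rightarrow> 'a::euclidean_space measure \<Rightarrow> 'a \<Rightarrow> real" where
  "c_const m s \<sigma> e = 2 / (2 ^ m * (\<integral>y. (1 - cos (e \<bullet> y)) ^ m \<partial>(nu_meas \<sigma> s)))"

definition delta_m :: "nat \<Rightarrow> ('a::euclidean_space \<Rightarrow> real) \<Rightarrow> 'a \<Rightarrow> 'a \<Rightarrow> real" where
  "delta_m m u x y = (\<Sum>k\<in>{- int m..int m}.
       (-1::real) ^ nat \<bar>k\<bar> * real ((2 * m) choose nat (int m - k)) * u (x + real_of_int k *\<^sub>R y))"

definition L_op :: "nat \<Rightarrow> real \<Rightarrow> 'a::euclidean_space measure \<Rightarrow> 'a \<Rightarrow> ('a \<Rightarrow> real) \<Rightarrow> 'a \<Rightarrow> real" where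
  "L_op m s \<sigma> e u x = c_const m s \<sigma> e / 2 * (\<integral>y. delta_m m u x y \<partial>(nu_meas \<sigma> s))"

end

theory Submission
  imports Defs
begin


definition wt :: "real \<Rightarrow> real \<Rightarrow> ennreal" where
  "wt s r = indicator {0<..} r * ennreal (r powr (-1 - 2 * s))"

lemma wt_meas[measurable]: "wt s \<in> borel_measurable borel"
  unfolding wt_def by measurable

lemma nu_nn_integral:
  fixes \<sigma> :: "'a::euclidean_space measure" and f :: "'a \<Rightarrow> ennreal"
  assumes sets: "sets \<sigma> = sets borel" and fin: "finite_measure \<sigma>"
    and f[measurable]: "f \<in> borel_measurable borel"
  shows "(\<integral>\<^sup>+y. f y \<partial>nu_meas \<sigma> s) = (\<integral>\<^sup>+\<theta>. (\<integral>\<^sup>+r. wt s r * f (r *\<^sub>R \<theta>) \<partial>lborel) \<partial>\<sigma>)"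
proof -
  let ?D = "density lborel (\<lambda>r::real. indicator {0<..} r * ennreal (r powr (-1 - 2 * s)))"
  have D: "?D = density lborel (wt s)" unfolding wt_def by simp
  interpret D: sigma_finite_measure "density lborel (wt s)"
    by (subst sigma_finite_measure.sigma_finite_iff_density_finite'[of lborel]) (auto intro: sigma_finite_lborel simp: wt_def indicator_def)
  interpret S: finite_measure \<sigma> by fact
  interpret P: pair_sigma_finite "density lborel (wt s)" \<sigma>
    by unfold_locales
  have sp: "sets (density lborel (wt s) \<Otimes>\<^sub>M \<sigma>) = sets (borel \<Otimes>\<^sub>M borel)"
    by (intro sets_pair_measure_cong) (auto simp: sets)
  have m1: "(\<lambda>(r, \<theta>). r *\<^sub>R \<theta>) \<in> measurable (density lborel (wt s) \<Otimes>\<^sub>M \<sigma>) (borel :: 'a measure)"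
    by (subst measurable_cong_sets[OF sp refl]) measurable
  have m2: "(\<lambda>p. f (case p of (r, \<theta>) \<Rightarrow> r *\<^sub>R \<theta>)) \<in> borel_measurable (density lborel (wt s) \<Otimes>\<^sub>M \<sigma>)"
    using measurable_comp[OF m1 f] by (simp add: o_def)
  have "(\<integral>\<^sup>+y. f y \<partial>nu_meas \<sigma> s) = (\<integral>\<^sup>+p. f (case p of (r, \<theta>) \<Rightarrow> r *\<^sub>R \<theta>) \<partial>(density lborel (wt s) \<Otimes>\<^sub>M \<sigma>))"
    unfolding nu_meas_def D by (rule nn_integral_distr[OF m1]) simp
  also have "\<dots> = (\<integral>\<^sup>+\<theta>. (\<integral>\<^sup>+r. f (r *\<^sub>R \<theta>) \<partial>density lborel (wt s)) \<partial>\<sigma>)"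
    using P.nn_integral_snd[OF m2] by simp
  also have "\<dots> = (\<integral>\<^sup>+\<theta>. (\<integral>\<^sup>+r. wt s r * f (r *\<^sub>R \<theta>) \<partial>lborel) \<partial>\<sigma>)"
    by (intro nn_integral_cong nn_integral_density) auto
  finally show ?thesis .
qed

lemma AE_sphere:
  fixes \<sigma> :: "'a::euclidean_space measure"
  assumes sets: "sets \<sigma> = sets borel" and P: "prob_space \<sigma>" and sph: "emeasure \<sigma> (sphere 0 1) = 1"
  shows "AE \<theta> in \<sigma>. \<theta> \<in> sphere 0 1"
proof -
  have "sphere (0::'a) 1 \<in> sets \<sigma>" using sets by simp
  moreover have "measure \<sigma> (sphere 0 1) = 1" using sph by (simp add: measure_def)
  ultimately show ?thesis using prob_space.AE_in_set_eq_1[OF P] by blast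
qed

lemma nu_radial:
  fixes \<sigma> :: "'a::euclidean_space measure" and g :: "real \<Rightarrow> ennreal"
  assumes sets: "sets \<sigma> = sets borel" and P: "prob_space \<sigma>" and sph: "emeasure \<sigma> (sphere 0 1) = 1"
    and g[measurable]: "g \<in> borel_measurable borel"
  shows "(\<integral>\<^sup>+y. g (norm y) \<partial>nu_meas \<sigma> s) = (\<integral>\<^sup>+r. wt s r * g r \<partial>lborel)"
proof -
  have fin: "finite_measure \<sigma>" using P by (simp add: prob_space_def)
  have "(\<integral>\<^sup>+y. g (norm y) \<partial>nu_meas \<sigma> s) = (\<integral>\<^sup>+\<theta>. (\<integral>\<^sup>+r. wt s r * g (norm (r *\<^sub>R \<theta>)) \<partial>lborel) \<partial>\<sigma>)"
    by (rule nu_nn_integral[OF sets fin]) measurable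
  also have "\<dots> = (\<integral>\<^sup>+\<theta>. (\<integral>\<^sup>+r. wt s r * g r \<partial>lborel) \<partial>\<sigma>)"
  proof (rule nn_integral_cong_AE)
    show "AE \<theta> in \<sigma>. (\<integral>\<^sup>+r. wt s r * g (norm (r *\<^sub>R \<theta>)) \<partial>lborel) = (\<integral>\<^sup>+r. wt s r * g r \<partial>lborel)"
      using AE_sphere[OF sets P sph]
    proof eventually_elim
      case (elim \<theta>)
      show ?case
      proof (rule nn_integral_cong)
        fix r :: real
        show "wt s r * g (norm (r *\<^sub>R \<theta>)) = wt s r * g r"
          using elim by (cases "r > 0") (auto simp: wt_def)
      qed
    qed
  qed
  also have "\<dots> = (\<integral>\<^sup>+r. wt s r * g r \<partial>lborel)"
    using prob_space.emeasure_space_1[OF P] by (simp add: nn_integral_const)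
  finally show ?thesis .
qed

lemma R1:
  fixes q :: real assumes q: "q > 1"
  shows "(\<integral>\<^sup>+r. ennreal (r powr (-q)) * indicator {1..} r \<partial>lborel) = ennreal (1 / (q - 1))"
proof -
  have "(\<integral>\<^sup>+r. ennreal (r powr (-q)) * indicator {1..} r \<partial>lborel) = 0 - ((-1 / (q - 1)) * 1 powr (1 - q))"
  proof (rule nn_integral_FTC_atLeast[where F="\<lambda>r. (-1 / (q - 1)) * r powr (1 - q)" and T=0])
    show "(\<lambda>r::real. r powr (-q)) \<in> borel_measurable borel" by measurable
    fix x :: real assume x: "1 \<le> x"
    show "DERIV (\<lambda>r. (-1 / (q - 1)) * r powr (1 - q)) x :> x powr (-q)"
    proof -
      have "DERIV (\<lambda>r. r powr (1 - q)) x :> (1 - q) * x powr (1 - q - 1)"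
        by (rule has_real_derivative_powr) (use x in auto)
      then have "DERIV (\<lambda>r. (-1 / (q - 1)) * r powr (1 - q)) x :> (-1 / (q - 1)) * ((1 - q) * x powr (1 - q - 1))"
        by (rule DERIV_cmult)
      moreover have "(-1 / (q - 1)) * ((1 - q) * x powr (1 - q - 1)) = x powr (-q)" using q by (simp add: field_simps)
      ultimately show ?thesis by simp
    qed
    show "0 \<le> x powr (-q)" by simp
  next
    have "((\<lambda>r::real. r powr (1 - q)) \<longlongrightarrow> 0) at_top"
      using q by (intro tendsto_neg_powr filterlim_ident) auto
    then show "((\<lambda>r::real. (-1 / (q - 1)) * r powr (1 - q)) \<longlongrightarrow> 0) at_top"
      using tendsto_mult_right_zero by blast
  qed
  then show ?thesis by simp
qed

lemma R2:
  fixes a :: real assumes a: "a > -1"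
  shows "(\<integral>\<^sup>+r. indicator {0..1} r * ennreal (r powr a) \<partial>lborel) = ennreal (1 / (a + 1))"
proof -
  have "((\<lambda>x. x powr a) has_integral (1 powr (a+1) / (a+1))) {0..1::real}"
    by (rule has_integral_powr_from_0) (use a in auto)
  then have "((\<lambda>x. x powr a) has_integral (1 / (a+1))) {0..1::real}" by simp
  from nn_integral_has_integral_lebesgue[OF _ this]
  have "integral\<^sup>N lborel (\<lambda>x. ennreal (indicator {0..1::real} x * x powr a)) = ennreal (1 / (a+1))"
    by simp
  then show ?thesis
    by (simp add: ennreal_indicator ennreal_mult' mult.commute)
qed

lemma R3:
  fixes s :: real assumes s: "s > 0"
  shows "(\<integral>\<^sup>+r. wt s r * indicator {1..} r \<partial>lborel) = ennreal (1 / (2 * s))"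
proof -
  have "(\<integral>\<^sup>+r. wt s r * indicator {1..} r \<partial>lborel) = (\<integral>\<^sup>+r. ennreal (r powr (-(1 + 2 * s))) * indicator {1..} r \<partial>lborel)"
    by (intro nn_integral_cong) (auto simp: wt_def indicator_def)
  also have "\<dots> = ennreal (1 / (1 + 2 * s - 1))" by (rule R1) (use s in auto)
  finally show ?thesis by simp
qed

lemma R4:
  fixes s b :: real assumes s: "b - 2 * s > 0"
  shows "(\<integral>\<^sup>+r. wt s r * indicator {..1} r * ennreal (r powr b) \<partial>lborel) = ennreal (1 / (b - 2 * s))"
proof -
  have "(\<integral>\<^sup>+r. wt s r * indicator {..1} r * ennreal (r powr b) \<partial>lborel) = (\<integral>\<^sup>+r. indicator {0..1} r * ennreal (r powr (b - 1 - 2 * s)) \<partial>lborel)"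
  proof (intro nn_integral_cong)
    fix r :: real
    show "wt s r * indicator {..1} r * ennreal (r powr b) = indicator {0..1} r * ennreal (r powr (b - 1 - 2 * s))"
    proof (cases "r > 0 \<and> r \<le> 1")
      case True
      then have "r powr (-1 - 2 * s) * r powr b = r powr (b - 1 - 2 * s)"
        by (simp add: powr_add[symmetric] algebra_simps)
      then show ?thesis using True by (simp add: wt_def ennreal_mult'[symmetric])
    next
      case False
      then show ?thesis by (cases "r = 0") (auto simp: wt_def indicator_def)
    qed
  qed
  also have "\<dots> = ennreal (1 / (b - 1 - 2 * s + 1))" by (rule R2) (use s in auto)
  finally show ?thesis by simp
qed



definition dd :: "nat \<Rightarrow> nat \<Rightarrow> real" where
  "dd m j = (-1) ^ (m + j) * real ((2 * m) choose j)"

lemma trig_id: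
  "(\<Sum>j=0..2*m. dd m j * cos ((real m - real j) * t)) = 2 ^ m * (1 - cos t) ^ m"
proof -
  define w where "w = cis t"
  have w0: "w \<noteq> 0" by (simp add: w_def)
  have cisj: "cis ((real m - real j) * t) = w ^ m * inverse w ^ j" for j
  proof -
    have "w ^ m * inverse w ^ j = cis (real m * t) * cis (real j * (- t))"
      by (simp only: w_def cis_inverse Complex.DeMoivre)
    also have "\<dots> = cis ((real m - real j) * t)"
      by (simp add: cis_mult left_diff_distrib)
    finally show ?thesis by simp
  qed
  have "(\<Sum>j=0..2*m. complex_of_real (dd m j) * cis ((real m - real j) * t))
      = (-1) ^ m * w ^ m * (\<Sum>j\<le>2*m. of_nat ((2*m) choose j) * (- inverse w) ^ j * 1 ^ (2*m - j))"
    unfolding atLeast0AtMost sum_distrib_left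
  proof (rule sum.cong[OF refl])
    fix j assume "j \<in> {..2*m}"
    show "complex_of_real (dd m j) * cis ((real m - real j) * t) =
      (-1) ^ m * w ^ m * (of_nat ((2*m) choose j) * (- inverse w) ^ j * 1 ^ (2*m - j))"
      unfolding cisj dd_def power_add power_minus[of "inverse w"] by simp
  qed
  also have "\<dots> = (-1) ^ m * w ^ m * (- inverse w + 1) ^ (2 * m)"
    by (subst binomial_ring) simp
  also have "\<dots> = (- (w * (1 - inverse w) ^ 2)) ^ m"
  proof -
    have "(- inverse w + 1) ^ (2 * m) = ((1 - inverse w) ^ 2) ^ m"
      by (simp add: power_mult[symmetric] mult.commute)
    then have "(-1) ^ m * w ^ m * (- inverse w + 1) ^ (2 * m) = ((-1) * w * (1 - inverse w) ^ 2) ^ m"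
      by (simp only: power_mult_distrib)
    then show ?thesis by simp
  qed
  also have "- (w * (1 - inverse w) ^ 2) = 2 - (w + inverse w)"
    using w0 by (simp add: power2_eq_square field_simps)
  also have "w + inverse w = 2 * cos t"
    by (simp add: w_def complex_eq_iff)
  finally have E: "(\<Sum>j=0..2*m. complex_of_real (dd m j) * cis ((real m - real j) * t)) = (2 - 2 * complex_of_real (cos t)) ^ m"
    by simp
  have "(\<Sum>j=0..2*m. dd m j * cos ((real m - real j) * t)) = Re (\<Sum>j=0..2*m. complex_of_real (dd m j) * cis ((real m - real j) * t))"
    by (simp add: Re_sum)
  also have "\<dots> = Re ((2 - 2 * complex_of_real (cos t)) ^ m)" by (simp only: E)
  also have "(2 - 2 * complex_of_real (cos t)) = complex_of_real (2 - 2 * cos t)" by simp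
  also have "Re (complex_of_real (2 - 2 * cos t) ^ m) = (2 - 2 * cos t) ^ m"
    by (simp only: of_real_power[symmetric] Re_complex_of_real)
  also have "(2 - 2 * cos t) ^ m = 2 ^ m * (1 - cos t) ^ m"
    by (simp add: power_mult_distrib[symmetric])
  finally show ?thesis .
qed

lemma sign_par: "-int m \<le> k \<Longrightarrow> k \<le> int m \<Longrightarrow> (-1::real) ^ nat \<bar>k\<bar> = (-1) ^ (m + nat (int m - k))"
proof -
  assume a: "-int m \<le> k" "k \<le> int m"
  have e1: "int (nat \<bar>k\<bar>) = \<bar>k\<bar>" by simp
  have e2: "int (m + nat (int m - k)) = 2 * int m - k" using a by simp
  have "even \<bar>k\<bar> \<longleftrightarrow> even (2 * int m - k)" by (cases "k \<ge> 0") presburger+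
  then have "even (int (nat \<bar>k\<bar>)) \<longleftrightarrow> even (int (m + nat (int m - k)))" by (simp only: e1 e2)
  then have "even (nat \<bar>k\<bar>) \<longleftrightarrow> even (m + nat (int m - k))" by (simp only: even_of_nat)
  then show ?thesis by (simp add: minus_one_power_iff)
qed

lemma delta_alt: "delta_m m u x y = (\<Sum>j=0..2*m. dd m j * u (x + (real m - real j) *\<^sub>R y))"
  unfolding delta_m_def
proof (rule sum.reindex_bij_witness[where j = "\<lambda>k. nat (int m - k)" and i = "\<lambda>j. int m - int j"])
  fix a assume a: "a \<in> {- int m..int m}"
  show "int m - int (nat (int m - a)) = a" using a by auto
  show "nat (int m - a) \<in> {0..2*m}" using a by auto
  have r: "real m - real (nat (int m - a)) = real_of_int a" using a by auto
  show "dd m (nat (int m - a)) * u (x + (real m - real (nat (int m - a))) *\<^sub>R y) =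
    (-1) ^ nat \<bar>a\<bar> * real (2 * m choose nat (int m - a)) * u (x + real_of_int a *\<^sub>R y)"
    unfolding r dd_def using sign_par[of m a] a by simp
next
  fix b assume b: "b \<in> {0..2*m}"
  show "nat (int m - (int m - int b)) = b" using b by auto
  show "int m - int b \<in> {- int m..int m}" using b by auto
qed

lemma dd_sum0: "m \<ge> 1 \<Longrightarrow> (\<Sum>j=0..2*m. dd m j) = 0"
  using trig_id[of m 0] by simp

lemma dd_mid: "dd m m = real ((2*m) choose m)"
  by (simp add: dd_def)



definition Pf :: "nat \<Rightarrow> real \<Rightarrow> real" where "Pf m r = 2 ^ m * (1 - cos r) ^ m"
definition Jm :: "nat \<Rightarrow> nat set" where "Jm m = {0..2*m} - {m}"
definition Gf :: "nat \<Rightarrow> real \<Rightarrow> real" where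
  "Gf m r = (\<Sum>j\<in>Jm m. dd m j * sin ((real m - real j) * r) / (real m - real j))"
definition Gb :: "nat \<Rightarrow> real" where "Gb m = (\<Sum>j=0..2*m. \<bar>dd m j\<bar>)"
definition c0 :: "nat \<Rightarrow> real" where "c0 m = real ((2*m) choose m)"

lemma Pf_nonneg: "Pf m r \<ge> 0" by (simp add: Pf_def)

lemma Pf_small: assumes m: "m \<ge> 1" and r: "\<bar>r\<bar> \<le> 1" shows "Pf m r \<le> r ^ 2"
proof -
  have "1 - cos r = 2 * sin (r/2) ^ 2" using cos_double_sin[of "r/2"] by simp
  moreover have "sin (r/2) ^ 2 \<le> (r/2) ^ 2"
    using abs_sin_x_le_abs_x[of "r/2"] by (metis abs_le_square_iff)
  ultimately have a: "2 * (1 - cos r) \<le> r ^ 2" by (simp add: power_divide)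
  have b: "0 \<le> 2 * (1 - cos r)" by simp
  have c: "r ^ 2 \<le> 1" using r by (metis abs_le_square_iff abs_one one_power2)
  have "Pf m r = (2 * (1 - cos r)) ^ m" by (simp only: Pf_def power_mult_distrib)
  also have "\<dots> \<le> (2 * (1 - cos r)) ^ 1"
    by (rule power_decreasing) (use m b a c in auto)
  finally show ?thesis using a by simp
qed

lemma Pf_decomp: "Pf m r = c0 m + (\<Sum>j\<in>Jm m. dd m j * cos ((real m - real j) * r))"
proof -
  have "Pf m r = (\<Sum>j=0..2*m. dd m j * cos ((real m - real j) * r))" by (simp add: Pf_def trig_id)
  also have "\<dots> = dd m m * cos ((real m - real m) * r) + (\<Sum>j\<in>Jm m. dd m j * cos ((real m - real j) * r))"
    unfolding Jm_def by (subst sum.remove[of _ m]) auto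
  finally show ?thesis by (simp add: dd_mid c0_def)
qed

lemma Gf_deriv: "DERIV (Gf m) r :> (\<Sum>j\<in>Jm m. dd m j * cos ((real m - real j) * r))"
  unfolding Gf_def
proof (rule DERIV_sum)
  fix j assume j: "j \<in> Jm m"
  then have ne: "real m - real j \<noteq> 0" by (auto simp: Jm_def)
  show "DERIV (\<lambda>r. dd m j * sin ((real m - real j) * r) / (real m - real j)) r :> dd m j * cos ((real m - real j) * r)"
    using ne by (auto intro!: derivative_eq_intros)
qed

lemma Gf_bound: "\<bar>Gf m r\<bar> \<le> Gb m"
proof -
  have "\<bar>Gf m r\<bar> \<le> (\<Sum>j\<in>Jm m. \<bar>dd m j * sin ((real m - real j) * r) / (real m - real j)\<bar>)"
    unfolding Gf_def by (rule sum_abs)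
  also have "\<dots> \<le> (\<Sum>j\<in>Jm m. \<bar>dd m j\<bar>)"
  proof (rule sum_mono)
    fix j assume j: "j \<in> Jm m"
    then have ne: "\<bar>real m - real j\<bar> \<ge> 1" by (auto simp: Jm_def)
    have h: "\<bar>sin ((real m - real j) * r) / (real m - real j)\<bar> \<le> 1"
      using ne by (auto simp: abs_divide divide_le_eq_1 intro: order_trans[OF abs_sin_le_one])
    then show "\<bar>dd m j * sin ((real m - real j) * r) / (real m - real j)\<bar> \<le> \<bar>dd m j\<bar>"
      using mult_left_le[OF h abs_ge_zero[of "dd m j"]] by (metis abs_mult times_divide_eq_right)
  qed
  also have "\<dots> \<le> Gb m" unfolding Gb_def Jm_def by (rule sum_mono2) auto
  finally show ?thesis .
qed

lemma Gb_nonneg: "Gb m \<ge> 0" unfolding Gb_def by (intro sum_nonneg) auto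

lemma Pf_meas[measurable]: "Pf m \<in> borel_measurable borel" unfolding Pf_def by measurable
lemma Gf_meas[measurable]: "Gf m \<in> borel_measurable borel" unfolding Gf_def by measurable

lemma tail:
  fixes s :: real assumes s: "s > 0"
  shows "\<exists>X. X \<le> ennreal (2 * Gb m) \<and>
    (\<integral>\<^sup>+r. ennreal (Pf m r * r powr (-(1 + 2 * s))) * indicator {1..} r \<partial>lborel) + X
      = ennreal (c0 m / (2 * s) + Gb m - Gf m 1)"
proof -
  define p where "p = 1 + 2 * s"
  have p: "p > 1" using s by (simp add: p_def)
  define A where "A r = Pf m r * r powr (-p)" for r
  define B where "B r = p * (Gb m - Gf m r) * r powr (-(p + 1))" for r
  define F where "F r = -(c0 m / (2 * s)) * r powr (-2 * s) + (Gf m r - Gb m) * r powr (-p)" for r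
  have Bnn: "B r \<ge> 0" for r using Gf_bound[of m r] p by (auto simp: B_def)
  have Ann: "A r \<ge> 0" for r using Pf_nonneg[of m r] by (auto simp: A_def)
  have FTC: "(\<integral>\<^sup>+r. ennreal (A r + B r) * indicator {1..} r \<partial>lborel) = 0 - F 1"
  proof (rule nn_integral_FTC_atLeast[where F=F and T=0])
    show "(\<lambda>r. A r + B r) \<in> borel_measurable borel" unfolding A_def B_def by measurable
    fix x :: real assume x: "1 \<le> x"
    show "0 \<le> A x + B x" using Ann Bnn by (simp add: add_nonneg_nonneg)
    have d1: "DERIV (\<lambda>r. r powr (-2 * s)) x :> (-2 * s) * x powr (-2 * s - 1)"
      by (rule has_real_derivative_powr) (use x in auto)
    have d2: "DERIV (\<lambda>r. r powr (-p)) x :> (-p) * x powr (-p - 1)"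
      by (rule has_real_derivative_powr) (use x in auto)
    have d3: "DERIV (\<lambda>r. Gf m r - Gb m) x :> (\<Sum>j\<in>Jm m. dd m j * cos ((real m - real j) * x))"
      using DERIV_diff[OF Gf_deriv DERIV_const] by simp
    have "DERIV F x :> (-(c0 m / (2 * s))) * ((-2 * s) * x powr (-2 * s - 1)) +
        ((\<Sum>j\<in>Jm m. dd m j * cos ((real m - real j) * x)) * x powr (-p) + (Gf m x - Gb m) * ((-p) * x powr (-p - 1)))"
    proof -
      have d4: "DERIV (\<lambda>r. (Gf m r - Gb m) * r powr (-p)) x :>
         (Gf m x - Gb m) * ((-p) * x powr (-p - 1)) + (\<Sum>j\<in>Jm m. dd m j * cos ((real m - real j) * x)) * x powr (-p)"
        by (rule DERIV_mult'[OF d3 d2])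
      have d5: "DERIV (\<lambda>r. (-(c0 m / (2 * s))) * r powr (-2 * s)) x :> (-(c0 m / (2 * s))) * ((-2 * s) * x powr (-2 * s - 1))"
        by (rule DERIV_cmult[OF d1])
      show ?thesis unfolding F_def using DERIV_add[OF d5 d4] by (simp add: add.commute)
    qed
    moreover have "(-(c0 m / (2 * s))) * ((-2 * s) * x powr (-2 * s - 1)) +
        ((\<Sum>j\<in>Jm m. dd m j * cos ((real m - real j) * x)) * x powr (-p) + (Gf m x - Gb m) * ((-p) * x powr (-p - 1)))
        = A x + B x"
    proof -
      have e1: "-2 * s - 1 = -p" by (simp add: p_def)
      have e2: "-p - 1 = -(p + 1)" by simp
      show ?thesis unfolding A_def B_def e1 e2 Pf_decomp using s by (simp add: field_simps)
    qed
    ultimately show "DERIV F x :> A x + B x" by simp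
  next
    have t1: "((\<lambda>r::real. r powr (-2 * s)) \<longlongrightarrow> 0) at_top"
      using s by (intro tendsto_neg_powr filterlim_ident) auto
    have t2: "((\<lambda>r::real. 2 * Gb m * r powr (-p)) \<longlongrightarrow> 0) at_top"
      using p tendsto_mult_right_zero[OF tendsto_neg_powr[OF _ filterlim_ident]] by auto
    have t3: "((\<lambda>r::real. (Gf m r - Gb m) * r powr (-p)) \<longlongrightarrow> 0) at_top"
    proof (rule Lim_null_comparison[OF _ t2])
      show "\<forall>\<^sub>F r in at_top. norm ((Gf m r - Gb m) * r powr (-p)) \<le> 2 * Gb m * r powr (-p)"
      proof (rule eventually_at_top_linorderI[of 1])
        fix r :: real assume "r \<ge> 1"
        have "\<bar>Gf m r - Gb m\<bar> \<le> 2 * Gb m" using Gf_bound[of m r] by auto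
        then show "norm ((Gf m r - Gb m) * r powr (-p)) \<le> 2 * Gb m * r powr (-p)"
          by (simp add: abs_mult mult_right_mono)
      qed
    qed
    show "(F \<longlongrightarrow> 0) at_top" unfolding F_def
      using tendsto_add[OF tendsto_mult_right_zero[OF t1, of "-(c0 m / (2 * s))"] t3] by simp
  qed
  have split: "(\<integral>\<^sup>+r. ennreal (A r + B r) * indicator {1..} r \<partial>lborel) =
      (\<integral>\<^sup>+r. ennreal (A r) * indicator {1..} r \<partial>lborel) + (\<integral>\<^sup>+r. ennreal (B r) * indicator {1..} r \<partial>lborel)"
  proof -
    have "(\<integral>\<^sup>+r. ennreal (A r + B r) * indicator {1..} r \<partial>lborel) =
      (\<integral>\<^sup>+r. ennreal (A r) * indicator {1..} r + ennreal (B r) * indicator {1..} r \<partial>lborel)"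
      using Ann Bnn by (intro nn_integral_cong) (simp add: ennreal_plus distrib_right)
    also have "\<dots> = (\<integral>\<^sup>+r. ennreal (A r) * indicator {1..} r \<partial>lborel) + (\<integral>\<^sup>+r. ennreal (B r) * indicator {1..} r \<partial>lborel)"
      by (rule nn_integral_add) (auto simp: A_def B_def)
    finally show ?thesis .
  qed
  have Xb: "(\<integral>\<^sup>+r. ennreal (B r) * indicator {1..} r \<partial>lborel) \<le> ennreal (2 * Gb m)"
  proof -
    have "(\<integral>\<^sup>+r. ennreal (B r) * indicator {1..} r \<partial>lborel) \<le>
        (\<integral>\<^sup>+r. ennreal (p * (2 * Gb m)) * (ennreal (r powr (-(p + 1))) * indicator {1..} r) \<partial>lborel)"
    proof (rule nn_integral_mono)
      fix r
      have "B r \<le> p * (2 * Gb m) * r powr (-(p + 1))"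
        unfolding B_def using Gf_bound[of m r] p
        by (intro mult_right_mono mult_left_mono) auto
      then show "ennreal (B r) * indicator {1..} r \<le> ennreal (p * (2 * Gb m)) * (ennreal (r powr (-(p + 1))) * indicator {1..} r)"
        using Gb_nonneg[of m] p by (auto simp: indicator_def ennreal_mult[symmetric] intro!: ennreal_leI)
    qed
    also have "\<dots> = ennreal (p * (2 * Gb m)) * ennreal (1 / (p + 1 - 1))"
      using R1[of "p + 1"] p by (subst nn_integral_cmult) auto
    also have "\<dots> = ennreal (2 * Gb m)"
      using p Gb_nonneg[of m] by (simp add: ennreal_mult[symmetric])
    finally show ?thesis .
  qed
  have "0 - F 1 = c0 m / (2 * s) + Gb m - Gf m 1" by (simp add: F_def)
  then show ?thesis using FTC split Xb p_def unfolding A_def by (intro exI[of _ "(\<integral>\<^sup>+r. ennreal (B r) * indicator {1..} r \<partial>lborel)"]) auto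
qed

lemma ennreal_sum_split:
  fixes A X :: ennreal and R xb :: real
  assumes "A + X = ennreal R" "X \<le> ennreal xb" "R \<ge> 0" "xb \<ge> 0"
  shows "\<exists>a. A = ennreal a \<and> a \<ge> 0 \<and> R - xb \<le> a \<and> a \<le> R"
proof -
  have At: "A \<noteq> \<top>" and Xt: "X \<noteq> \<top>" using assms(1) by (auto simp: top_add add_top)
  obtain a where a: "A = ennreal a" "a \<ge> 0" using At by (cases A) auto
  obtain x where x: "X = ennreal x" "x \<ge> 0" using Xt by (cases X) auto
  have "ennreal (a + x) = ennreal R" using assms(1) a x by (simp add: ennreal_plus)
  then have ax: "a + x = R" by (subst (asm) ennreal_inj) (use a x assms(3) in auto)
  have "x \<le> xb" using assms(2) x assms(4) by (simp add: ennreal_le_iff)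
  then show ?thesis using a x ax by (intro exI[of _ a]) auto
qed

definition I2 :: "real \<Rightarrow> nat \<Rightarrow> ennreal" where
  "I2 s m = (\<integral>\<^sup>+r. wt s r * ennreal (Pf m r) \<partial>lborel)"

lemma I2_asymp:
  fixes s :: real assumes s: "0 < s" "s \<le> 1/2" and m: "m \<ge> 1"
  shows "\<exists>v. I2 s m = ennreal v \<and> v \<ge> 0 \<and> \<bar>v - c0 m / (2 * s)\<bar> \<le> 1 + 2 * Gb m"
proof -
  define P0 where "P0 = (\<integral>\<^sup>+r. wt s r * ennreal (Pf m r) * indicator {..<1} r \<partial>lborel)"
  define P1 where "P1 = (\<integral>\<^sup>+r. ennreal (Pf m r * r powr (-(1 + 2 * s))) * indicator {1..} r \<partial>lborel)"
  have "I2 s m = (\<integral>\<^sup>+r. wt s r * ennreal (Pf m r) * indicator {..<1} r + ennreal (Pf m r * r powr (-(1 + 2 * s))) * indicator {1..} r \<partial>lborel)"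
    unfolding I2_def
  proof (intro nn_integral_cong)
    fix r :: real
    show "wt s r * ennreal (Pf m r) = wt s r * ennreal (Pf m r) * indicator {..<1} r + ennreal (Pf m r * r powr (-(1 + 2 * s))) * indicator {1..} r"
    proof (cases "r < 1")
      case True then show ?thesis by simp
    next
      case False
      then have "r > 0" by simp
      then show ?thesis using False Pf_nonneg[of m r]
        by (simp add: wt_def ennreal_mult'[symmetric] mult.commute)
    qed
  qed
  also have "\<dots> = P0 + P1" unfolding P0_def P1_def by (rule nn_integral_add) auto
  finally have I: "I2 s m = P0 + P1" .
  have "P0 \<le> (\<integral>\<^sup>+r. wt s r * indicator {..1} r * ennreal (r powr 2) \<partial>lborel)"
    unfolding P0_def
  proof (rule nn_integral_mono)
    fix r :: real
    show "wt s r * ennreal (Pf m r) * indicator {..<1} r \<le> wt s r * indicator {..1} r * ennreal (r powr 2)"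
    proof (cases "0 < r \<and> r < 1")
      case True
      then have "Pf m r \<le> r powr 2" using Pf_small[OF m, of r] by (simp add: powr_realpow)
      then have "ennreal (Pf m r) \<le> ennreal (r powr 2)" by (rule ennreal_leI)
      then show ?thesis using True by (simp add: mult_left_mono)
    next
      case False
      then show ?thesis by (auto simp: wt_def indicator_def)
    qed
  qed
  also have "\<dots> = ennreal (1 / (2 - 2 * s))" by (rule R4) (use s in auto)
  also have "\<dots> \<le> ennreal 1" using s by (intro ennreal_leI) (auto simp: field_simps)
  finally have P0b: "P0 \<le> ennreal 1" .
  obtain b where b: "P0 = ennreal b" "b \<ge> 0" "b \<le> 1"
    using P0b by (cases P0) (auto simp: ennreal_le_iff top_unique)
  obtain X where X: "X \<le> ennreal (2 * Gb m)" "P1 + X = ennreal (c0 m / (2 * s) + Gb m - Gf m 1)"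
    using tail[OF s(1), of m] unfolding P1_def by blast
  have R0: "c0 m / (2 * s) + Gb m - Gf m 1 \<ge> 0"
  proof -
    have "c0 m / (2 * s) \<ge> 0" using s by (simp add: c0_def)
    then show ?thesis using Gf_bound[of m 1] by (auto simp: abs_le_iff)
  qed
  obtain a where a: "P1 = ennreal a" "a \<ge> 0" "c0 m / (2 * s) + Gb m - Gf m 1 - 2 * Gb m \<le> a" "a \<le> c0 m / (2 * s) + Gb m - Gf m 1"
    using ennreal_sum_split[OF X(2) X(1) R0] Gb_nonneg[of m] by auto
  have "I2 s m = ennreal (b + a)" using I a b by (simp add: ennreal_plus)
  moreover have "\<bar>b + a - c0 m / (2 * s)\<bar> \<le> 1 + 2 * Gb m"
    using a b Gf_bound[of m 1] by (auto simp: abs_le_iff)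
  moreover have "b + a \<ge> 0" using a b by simp
  ultimately show ?thesis by blast
qed



definition I1 :: "real \<Rightarrow> nat \<Rightarrow> ennreal" where
  "I1 s m = (\<integral>\<^sup>+r. wt s r * ennreal ((1 - cos r) ^ m) \<partial>lborel)"

lemma I2_I1: "I2 s m = ennreal (2 ^ m) * I1 s m"
  unfolding I2_def I1_def Pf_def
  by (subst nn_integral_cmult[symmetric]) (auto intro!: nn_integral_cong simp: ennreal_mult' mult_ac)

lemma scaling:
  fixes a s :: real assumes m: "m \<ge> 1"
  shows "(\<integral>\<^sup>+r. wt s r * ennreal ((1 - cos (r * a)) ^ m) \<partial>lborel) = ennreal (\<bar>a\<bar> powr (2 * s)) * I1 s m"
proof (cases "a = 0")
  case True
  show ?thesis using True m by (simp add: power_0_left)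
next
  case False
  let ?L = "(\<integral>\<^sup>+r. wt s r * ennreal ((1 - cos (r * a)) ^ m) \<partial>lborel)"
  have c: "\<bar>a\<bar> \<noteq> 0" using False by simp
  have "I1 s m = ennreal \<bar>a\<bar> * (\<integral>\<^sup>+x. wt s (0 + \<bar>a\<bar> * x) * ennreal ((1 - cos (0 + \<bar>a\<bar> * x)) ^ m) \<partial>lborel)"
    unfolding I1_def using nn_integral_real_affine[OF _ c, of "\<lambda>r. wt s r * ennreal ((1 - cos r) ^ m)" 0]
    by simp
  also have "(\<integral>\<^sup>+x. wt s (0 + \<bar>a\<bar> * x) * ennreal ((1 - cos (0 + \<bar>a\<bar> * x)) ^ m) \<partial>lborel)
      = (\<integral>\<^sup>+x. ennreal (\<bar>a\<bar> powr (-1 - 2 * s)) * (wt s x * ennreal ((1 - cos (x * a)) ^ m)) \<partial>lborel)"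
  proof (intro nn_integral_cong)
    fix x :: real
    have cs: "cos (\<bar>a\<bar> * x) = cos (x * a)"
      by (cases "a \<ge> 0") (auto simp: mult.commute)
    show "wt s (0 + \<bar>a\<bar> * x) * ennreal ((1 - cos (0 + \<bar>a\<bar> * x)) ^ m) =
      ennreal (\<bar>a\<bar> powr (-1 - 2 * s)) * (wt s x * ennreal ((1 - cos (x * a)) ^ m))"
    proof (cases "x > 0")
      case True
      then have "(\<bar>a\<bar> * x) powr (-1 - 2 * s) = \<bar>a\<bar> powr (-1 - 2 * s) * x powr (-1 - 2 * s)"
        by (simp add: powr_mult)
      then show ?thesis using True c cs
        by (simp add: wt_def ennreal_mult' zero_less_mult_iff mult_ac)
    next
      case False
      then show ?thesis using c by (auto simp: wt_def zero_less_mult_iff)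
    qed
  qed
  also have "\<dots> = ennreal (\<bar>a\<bar> powr (-1 - 2 * s)) * ?L"
    by (rule nn_integral_cmult) measurable
  finally have I: "I1 s m = ennreal \<bar>a\<bar> * (ennreal (\<bar>a\<bar> powr (-1 - 2 * s)) * ?L)" .
  have one: "\<bar>a\<bar> powr (2 * s) * (\<bar>a\<bar> * \<bar>a\<bar> powr (-1 - 2 * s)) = 1"
  proof -
    have p1: "\<bar>a\<bar> powr 1 = \<bar>a\<bar>" using c by simp
    have "\<bar>a\<bar> powr (2 * s) * (\<bar>a\<bar> * \<bar>a\<bar> powr (-1 - 2 * s)) = \<bar>a\<bar> powr (2 * s) * (\<bar>a\<bar> powr 1 * \<bar>a\<bar> powr (-1 - 2 * s))"
      by (simp only: p1)
    also have "\<dots> = \<bar>a\<bar> powr (2 * s + (1 + (-1 - 2 * s)))" by (simp only: powr_add)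
    also have "\<dots> = 1" using c by simp
    finally show ?thesis .
  qed
  have "ennreal (\<bar>a\<bar> powr (2 * s)) * I1 s m = ennreal (\<bar>a\<bar> powr (2 * s) * (\<bar>a\<bar> * \<bar>a\<bar> powr (-1 - 2 * s))) * ?L"
    unfolding I by (simp add: ennreal_mult' mult_ac)
  also have "\<dots> = ?L" by (simp only: one) simp
  finally show ?thesis by simp
qed

lemma denom_nn:
  fixes \<sigma> :: "'a::euclidean_space measure" and e :: 'a
  assumes sets: "sets \<sigma> = sets borel" and P: "prob_space \<sigma>" and m: "m \<ge> 1"
  shows "(\<integral>\<^sup>+y. ennreal ((1 - cos (e \<bullet> y)) ^ m) \<partial>nu_meas \<sigma> s)
     = (\<integral>\<^sup>+\<theta>. ennreal (\<bar>e \<bullet> \<theta>\<bar> powr (2 * s)) \<partial>\<sigma>) * I1 s m"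
proof -
  have fin: "finite_measure \<sigma>" using P by (simp add: prob_space_def)
  have "(\<integral>\<^sup>+y. ennreal ((1 - cos (e \<bullet> y)) ^ m) \<partial>nu_meas \<sigma> s)
      = (\<integral>\<^sup>+\<theta>. (\<integral>\<^sup>+r. wt s r * ennreal ((1 - cos (e \<bullet> (r *\<^sub>R \<theta>))) ^ m) \<partial>lborel) \<partial>\<sigma>)"
    by (rule nu_nn_integral[OF sets fin]) measurable
  also have "\<dots> = (\<integral>\<^sup>+\<theta>. ennreal (\<bar>e \<bullet> \<theta>\<bar> powr (2 * s)) * I1 s m \<partial>\<sigma>)"
    by (intro nn_integral_cong) (simp add: scaling[OF m, symmetric])
  also have "\<dots> = (\<integral>\<^sup>+\<theta>. ennreal (\<bar>e \<bullet> \<theta>\<bar> powr (2 * s)) \<partial>\<sigma>) * I1 s m"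
    by (rule nn_integral_multc) (simp add: sets_eq_imp_space_eq measurable_cong_sets[OF sets refl])
  finally show ?thesis .
qed



lemma ball_sets[measurable]: "ball (c::'a::euclidean_space) r \<in> sets borel" by simp
lemma pred_ball[measurable]: "Measurable.pred borel (\<lambda>x::'a::euclidean_space. x \<in> ball c r)"
  by (simp add: pred_def)

definition gB :: "real \<Rightarrow> 'a::euclidean_space \<Rightarrow> ennreal" where
  "gB s \<theta> = (\<integral>\<^sup>+e. indicator (ball 0 1) e * ennreal (\<bar>e \<bullet> \<theta>\<bar> powr (2 * s)) \<partial>lborel)"

lemma lamB: "0 < emeasure lborel (ball (0::'a::euclidean_space) 1)" "emeasure lborel (ball (0::'a) 1) < \<infinity>"
  by (auto simp: emeasure_ball unit_ball_vol_pos emeasure_lborel_ball_finite)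

lemma hyper_AE:
  fixes l :: "'a::euclidean_space" assumes "l \<noteq> 0"
  shows "AE e in lborel. e \<bullet> l \<noteq> 0"
proof -
  have "negligible {x. l \<bullet> x = 0}" using negligible_hyperplane[of l 0] assms by simp
  then have "{x. l \<bullet> x = 0} \<in> null_sets lebesgue" by (simp add: negligible_iff_null_sets)
  moreover have "{x::'a. l \<bullet> x = 0} \<in> sets lborel" by measurable
  ultimately have "{x. l \<bullet> x = 0} \<in> null_sets lborel" by (simp add: null_sets_completion_iff)
  from AE_not_in[OF this] show ?thesis by (simp add: inner_commute)
qed

lemma unif:
  fixes \<epsilon> :: real assumes eps: "\<epsilon> > 0"
  shows "\<exists>\<delta>>0. \<forall>s. 0 < s \<and> s < \<delta> \<longrightarrow> (\<forall>\<theta>::'a::euclidean_space \<in> sphere 0 1.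
           ennreal (1 - \<epsilon>) * emeasure lborel (ball (0::'a) 1) \<le> gB s \<theta>)"
proof (rule ccontr)
  let ?B = "emeasure lborel (ball (0::'a) 1)"
  assume "\<not> ?thesis"
  then have "\<forall>n::nat. \<exists>s \<theta>. 0 < s \<and> s < 1 / Suc n \<and> \<theta> \<in> sphere (0::'a) 1 \<and> \<not> (ennreal (1 - \<epsilon>) * ?B \<le> gB s \<theta>)"
    by (metis of_nat_0_less_iff zero_less_Suc zero_less_divide_1_iff)
  then obtain S \<Theta> where S: "\<And>n. 0 < S n" "\<And>n. S n < 1 / Suc n" and Th: "\<And>n. \<Theta> n \<in> sphere (0::'a) 1"
    and bad: "\<And>n. gB (S n) (\<Theta> n) < ennreal (1 - \<epsilon>) * ?B"
    by (metis not_le)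
  obtain l r where l: "l \<in> sphere (0::'a) 1" and r: "strict_mono r" and lim: "(\<Theta> \<circ> r) \<longlonglongrightarrow> l"
    using compact_imp_seq_compact[OF compact_sphere[of "0::'a" 1]] Th unfolding seq_compact_def by metis
  have S0: "S \<longlonglongrightarrow> 0"
  proof (rule tendsto_sandwich[of "\<lambda>_. 0" _ _ "\<lambda>n. 1 / Suc n"])
    show "\<forall>\<^sub>F n in sequentially. 0 \<le> S n" using S(1) by (intro always_eventually allI less_imp_le) 
    show "\<forall>\<^sub>F n in sequentially. S n \<le> 1 / Suc n" using S(2) by (intro always_eventually allI less_imp_le)
    show "(\<lambda>n. 1 / real (Suc n)) \<longlonglongrightarrow> 0" by (rule LIMSEQ_inverse_real_of_nat[unfolded inverse_eq_divide])
  qed simp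
  have Sr: "(\<lambda>n. S (r n)) \<longlonglongrightarrow> 0" using LIMSEQ_subseq_LIMSEQ[OF S0 r] by (simp add: o_def)
  define u where "u n e = indicator (ball 0 1) e * ennreal (\<bar>e \<bullet> \<Theta> (r n)\<bar> powr (2 * S (r n)))" for n e
  have um: "\<And>n. u n \<in> borel_measurable lborel" unfolding u_def by measurable
  have l0: "l \<noteq> 0" using l by auto
  have pw: "AE e in lborel. liminf (\<lambda>n. u n e) = indicator (ball 0 1) e"
    using hyper_AE[OF l0]
  proof eventually_elim
    case (elim e)
    have t1: "(\<lambda>n. \<bar>e \<bullet> \<Theta> (r n)\<bar>) \<longlonglongrightarrow> \<bar>e \<bullet> l\<bar>"
      using lim by (intro tendsto_intros) (simp add: o_def)
    have t2: "(\<lambda>n. 2 * S (r n)) \<longlonglongrightarrow> 2 * 0" using Sr by (intro tendsto_intros)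
    have "(\<lambda>n. \<bar>e \<bullet> \<Theta> (r n)\<bar> powr (2 * S (r n))) \<longlonglongrightarrow> \<bar>e \<bullet> l\<bar> powr (2 * 0)"
      by (rule tendsto_powr[OF t1 t2]) (use elim in simp)
    then have "(\<lambda>n. \<bar>e \<bullet> \<Theta> (r n)\<bar> powr (2 * S (r n))) \<longlonglongrightarrow> 1" using elim by simp
    then have "(\<lambda>n. ennreal (\<bar>e \<bullet> \<Theta> (r n)\<bar> powr (2 * S (r n)))) \<longlonglongrightarrow> ennreal 1"
      by (rule tendsto_ennrealI)
    then have "(\<lambda>n. u n e) \<longlonglongrightarrow> indicator (ball 0 1) e"
      unfolding u_def by (cases "e \<in> ball 0 1") auto
    then show ?case by (rule lim_imp_Liminf[OF trivial_limit_sequentially])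
  qed
  have "?B = (\<integral>\<^sup>+e. indicator (ball (0::'a) 1) e \<partial>lborel)" by simp
  also have "\<dots> = (\<integral>\<^sup>+e. liminf (\<lambda>n. u n e) \<partial>lborel)"
    using pw by (intro nn_integral_cong_AE) (auto elim: eventually_mono)
  also have "\<dots> \<le> liminf (\<lambda>n. integral\<^sup>N lborel (u n))"
    by (rule nn_integral_liminf) (use um in auto)
  also have "\<dots> \<le> limsup (\<lambda>n. integral\<^sup>N lborel (u n))"
    by (rule Liminf_le_Limsup) simp
  also have "\<dots> \<le> ennreal (1 - \<epsilon>) * ?B"
  proof (rule Limsup_bounded, rule always_eventually, rule allI)
    fix n
    have "integral\<^sup>N lborel (u n) = gB (S (r n)) (\<Theta> (r n))" unfolding gB_def by (rule nn_integral_cong) (simp add: u_def)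
    then show "integral\<^sup>N lborel (u n) \<le> ennreal (1 - \<epsilon>) * ?B" using bad[of "r n"] by simp
  qed
  finally have le: "?B \<le> ennreal (1 - \<epsilon>) * ?B" .
  obtain b where b: "?B = ennreal b" "b > 0" using lamB[where 'a='a]
    by (cases ?B) (auto simp: ennreal_less_iff)
  show False
  proof (cases "\<epsilon> \<ge> 1")
    case True
    then have "ennreal (1 - \<epsilon>) = 0" by (simp add: ennreal_eq_0_iff)
    then show False using le b by simp
  next
    case False
    then have "ennreal b \<le> ennreal ((1 - \<epsilon>) * b)" using le b by (simp add: ennreal_mult)
    then have "b \<le> (1 - \<epsilon>) * b" using False b by (simp add: ennreal_le_iff)
    then have "\<epsilon> * b \<le> 0" by (simp add: algebra_simps)
    moreover have "\<epsilon> * b > 0" using b eps by simp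
    ultimately show False by simp
  qed
qed

lemma M_nn:
  fixes \<sigma> :: "'a::euclidean_space measure" and e :: 'a
  assumes sets: "sets \<sigma> = sets borel" and P: "prob_space \<sigma>" and sph: "emeasure \<sigma> (sphere 0 1) = 1"
    and e: "norm e \<le> 1" and s: "s \<ge> 0"
  shows "(\<integral>\<^sup>+\<theta>. ennreal (\<bar>e \<bullet> \<theta>\<bar> powr (2 * s)) \<partial>\<sigma>) = ennreal (M_fun s \<sigma> e)"
    and "M_fun s \<sigma> e \<le> 1" and "M_fun s \<sigma> e \<ge> 0"
proof -
  let ?X = "(\<integral>\<^sup>+\<theta>. ennreal (\<bar>e \<bullet> \<theta>\<bar> powr (2 * s)) \<partial>\<sigma>)"
  have meas: "(\<lambda>\<theta>. \<bar>e \<bullet> \<theta>\<bar> powr (2 * s)) \<in> borel_measurable \<sigma>"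
    by (subst measurable_cong_sets[OF sets refl]) measurable
  have "?X \<le> (\<integral>\<^sup>+\<theta>. 1 \<partial>\<sigma>)"
  proof (rule nn_integral_mono_AE)
    show "AE \<theta> in \<sigma>. ennreal (\<bar>e \<bullet> \<theta>\<bar> powr (2 * s)) \<le> 1"
      using AE_sphere[OF sets P sph]
    proof eventually_elim
      case (elim \<theta>)
      have "\<bar>e \<bullet> \<theta>\<bar> \<le> norm e * norm \<theta>" by (rule Cauchy_Schwarz_ineq2)
      also have "\<dots> \<le> 1" using elim e by simp
      finally have "\<bar>e \<bullet> \<theta>\<bar> powr (2 * s) \<le> 1" using s by (intro powr_le1) auto
      then show ?case by simp
    qed
  qed
  also have "\<dots> = 1" using prob_space.emeasure_space_1[OF P] by simp
  finally have X1: "?X \<le> 1" .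
  have M: "M_fun s \<sigma> e = enn2real ?X"
    unfolding M_fun_def by (rule integral_eq_nn_integral[OF meas]) simp
  have Xf: "?X < \<top>" using X1 by (simp add: le_less_trans)
  show "?X = ennreal (M_fun s \<sigma> e)" unfolding M using Xf by simp
  show "M_fun s \<sigma> e \<le> 1" unfolding M using X1 Xf by (simp add: enn2real_leI)
  show "M_fun s \<sigma> e \<ge> 0" unfolding M by simp
qed

lemma tonelli_bound:
  fixes \<sigma> :: "'a::euclidean_space measure"
  assumes sets: "sets \<sigma> = sets borel" and P: "prob_space \<sigma>" and sph: "emeasure \<sigma> (sphere 0 1) = 1"
    and s: "s > 0" and Mx: "\<And>e'. e' \<in> sphere 0 1 \<Longrightarrow> M_fun s \<sigma> e' \<le> Mx"
  shows "(\<integral>\<^sup>+\<theta>. gB s \<theta> \<partial>\<sigma>) \<le> emeasure lborel (ball (0::'a) 1) * ennreal Mx"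
proof -
  interpret S: prob_space \<sigma> by fact
  interpret PS: pair_sigma_finite lborel \<sigma> by unfold_locales
  have sp: "sets (lborel \<Otimes>\<^sub>M \<sigma>) = sets (borel \<Otimes>\<^sub>M (borel :: 'a measure))"
    by (intro sets_pair_measure_cong) (auto simp: sets)
  have fm: "case_prod (\<lambda>e \<theta>. indicator (ball (0::'a) 1) e * ennreal (\<bar>e \<bullet> \<theta>\<bar> powr (2 * s))) \<in> borel_measurable (lborel \<Otimes>\<^sub>M \<sigma>)"
    by (subst measurable_cong_sets[OF sp refl]) measurable
  have "(\<integral>\<^sup>+\<theta>. gB s \<theta> \<partial>\<sigma>) = (\<integral>\<^sup>+e. (\<integral>\<^sup>+\<theta>. indicator (ball (0::'a) 1) e * ennreal (\<bar>e \<bullet> \<theta>\<bar> powr (2 * s)) \<partial>\<sigma>) \<partial>lborel)"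
    unfolding gB_def by (rule PS.Fubini'[OF fm])
  also have "\<dots> \<le> (\<integral>\<^sup>+e. indicator (ball (0::'a) 1) e * ennreal Mx \<partial>lborel)"
  proof (rule nn_integral_mono)
    fix e :: 'a
    have meas: "\<And>c::'a. (\<lambda>\<theta>. ennreal (\<bar>c \<bullet> \<theta>\<bar> powr (2 * s))) \<in> borel_measurable \<sigma>"
      by (subst measurable_cong_sets[OF sets refl]) measurable
    have inner: "(\<integral>\<^sup>+\<theta>. ennreal (\<bar>e \<bullet> \<theta>\<bar> powr (2 * s)) \<partial>\<sigma>) \<le> ennreal Mx" if eB: "e \<in> ball 0 1"
    proof (cases "e = 0")
      case True
      have "Mx \<ge> 0"
      proof -
        obtain b :: 'a where "b \<in> Basis" using nonempty_Basis by blast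
        then have "b \<in> sphere 0 1" by simp
        then show ?thesis using Mx M_nn(3)[OF sets P sph _ , of b s] s by force
      qed
      then show ?thesis using True by simp
    next
      case False
      define h where "h = sgn e"
      have hs: "h \<in> sphere 0 1" using False by (simp add: h_def norm_sgn)
      have ne: "norm e < 1" using eB by simp
      have "(\<integral>\<^sup>+\<theta>. ennreal (\<bar>e \<bullet> \<theta>\<bar> powr (2 * s)) \<partial>\<sigma>) \<le> (\<integral>\<^sup>+\<theta>. ennreal (\<bar>h \<bullet> \<theta>\<bar> powr (2 * s)) \<partial>\<sigma>)"
      proof (rule nn_integral_mono)
        fix \<theta> :: 'a
        have "e = norm e *\<^sub>R h" using False by (simp add: h_def sgn_div_norm)
        then have "\<bar>e \<bullet> \<theta>\<bar> = norm e * \<bar>h \<bullet> \<theta>\<bar>" by (metis abs_mult abs_norm_cancel inner_scaleR_left)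
        then have "\<bar>e \<bullet> \<theta>\<bar> powr (2 * s) = norm e powr (2 * s) * \<bar>h \<bullet> \<theta>\<bar> powr (2 * s)"
          by (simp add: powr_mult)
        also have "\<dots> \<le> 1 * \<bar>h \<bullet> \<theta>\<bar> powr (2 * s)"
          using ne s by (intro mult_right_mono powr_le1) auto
        finally show "ennreal (\<bar>e \<bullet> \<theta>\<bar> powr (2 * s)) \<le> ennreal (\<bar>h \<bullet> \<theta>\<bar> powr (2 * s))"
          by (intro ennreal_leI) simp
      qed
      also have "\<dots> = ennreal (M_fun s \<sigma> h)" using hs s by (intro M_nn(1)[OF sets P sph]) auto
      also have "\<dots> \<le> ennreal Mx" using Mx[OF hs] by (rule ennreal_leI)
      finally show ?thesis .
    qed
    have "(\<integral>\<^sup>+\<theta>. indicator (ball (0::'a) 1) e * ennreal (\<bar>e \<bullet> \<theta>\<bar> powr (2 * s)) \<partial>\<sigma>)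
       = indicator (ball (0::'a) 1) e * (\<integral>\<^sup>+\<theta>. ennreal (\<bar>e \<bullet> \<theta>\<bar> powr (2 * s)) \<partial>\<sigma>)"
      by (rule nn_integral_cmult[OF meas])
    also have "\<dots> \<le> indicator (ball (0::'a) 1) e * ennreal Mx"
      using inner by (cases "e \<in> ball 0 1") auto
    finally show "(\<integral>\<^sup>+\<theta>. indicator (ball (0::'a) 1) e * ennreal (\<bar>e \<bullet> \<theta>\<bar> powr (2 * s)) \<partial>\<sigma>) \<le> indicator (ball (0::'a) 1) e * ennreal Mx" .
  qed
  also have "\<dots> = emeasure lborel (ball (0::'a) 1) * ennreal Mx"
    by (subst nn_integral_multc) auto
  finally show ?thesis .
qed



lemma sets_nu: "sets (nu_meas \<sigma> s) = sets (borel :: 'a::euclidean_space measure)"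
  unfolding nu_meas_def by simp

lemma holder_small:
  fixes u :: "'a::euclidean_space \<Rightarrow> real"
  assumes hol: "\<And>y z. \<bar>u y - u z\<bar> \<le> C * norm (y - z) powr \<beta>" and C: "C \<ge> 0"
    and b: "0 < \<beta>" "\<beta> \<le> 1" and m: "m \<ge> 1"
  shows "\<bar>delta_m m u x y\<bar> \<le> Gb m * C * real m * norm y powr \<beta>"
proof -
  have "delta_m m u x y = (\<Sum>j=0..2*m. dd m j * u (x + (real m - real j) *\<^sub>R y)) - (\<Sum>j=0..2*m. dd m j) * u x"
    using dd_sum0[OF m] by (simp add: delta_alt)
  also have "\<dots> = (\<Sum>j=0..2*m. dd m j * (u (x + (real m - real j) *\<^sub>R y) - u x))"
    by (simp add: sum_distrib_right sum_subtractf right_diff_distrib)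
  finally have eq: "delta_m m u x y = (\<Sum>j=0..2*m. dd m j * (u (x + (real m - real j) *\<^sub>R y) - u x))" .
  have "\<bar>delta_m m u x y\<bar> \<le> (\<Sum>j=0..2*m. \<bar>dd m j * (u (x + (real m - real j) *\<^sub>R y) - u x)\<bar>)"
    unfolding eq by (rule sum_abs)
  also have "\<dots> \<le> (\<Sum>j=0..2*m. \<bar>dd m j\<bar> * (C * real m * norm y powr \<beta>))"
  proof (rule sum_mono)
    fix j assume j: "j \<in> {0..2*m}"
    have "\<bar>u (x + (real m - real j) *\<^sub>R y) - u x\<bar> \<le> C * norm ((real m - real j) *\<^sub>R y) powr \<beta>"
      using hol[of "x + (real m - real j) *\<^sub>R y" x] by simp
    also have "norm ((real m - real j) *\<^sub>R y) \<le> real m * norm y"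
      using j by (auto intro!: mult_right_mono)
    then have "norm ((real m - real j) *\<^sub>R y) powr \<beta> \<le> (real m * norm y) powr \<beta>"
      using b by (intro powr_mono2) auto
    also have "(real m * norm y) powr \<beta> = real m powr \<beta> * norm y powr \<beta>"
      by (simp add: powr_mult)
    also have "real m powr \<beta> \<le> real m powr 1"
      using m b by (intro powr_mono) auto
    then have "real m powr \<beta> * norm y powr \<beta> \<le> real m * norm y powr \<beta>"
      using m by (intro mult_right_mono) auto
    finally have "\<bar>u (x + (real m - real j) *\<^sub>R y) - u x\<bar> \<le> C * (real m * norm y powr \<beta>)"
      using C by (simp add: mult_left_mono)
    then show "\<bar>dd m j * (u (x + (real m - real j) *\<^sub>R y) - u x)\<bar> \<le> \<bar>dd m j\<bar> * (C * real m * norm y powr \<beta>)"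
      by (simp add: abs_mult mult_left_mono mult.assoc)
  qed
  also have "\<dots> = Gb m * C * real m * norm y powr \<beta>"
    unfolding Gb_def sum_distrib_right by (simp add: mult_ac)
  finally show ?thesis .
qed

lemma large_part:
  fixes u :: "'a::euclidean_space \<Rightarrow> real"
  assumes ub: "\<And>z. \<bar>u z\<bar> \<le> U" and supp: "\<And>z. norm z \<ge> \<rho> \<Longrightarrow> u z = 0"
  shows "\<bar>delta_m m u x y - c0 m * u x\<bar> \<le> Gb m * U"
    and "norm y \<ge> \<rho> + norm x \<Longrightarrow> delta_m m u x y - c0 m * u x = 0"
proof -
  have eq: "delta_m m u x y - c0 m * u x = (\<Sum>j\<in>Jm m. dd m j * u (x + (real m - real j) *\<^sub>R y))"
    unfolding delta_alt Jm_def by (subst sum.remove[of _ m]) (auto simp: dd_mid c0_def)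
  have "\<bar>\<Sum>j\<in>Jm m. dd m j * u (x + (real m - real j) *\<^sub>R y)\<bar> \<le> (\<Sum>j\<in>Jm m. \<bar>dd m j\<bar> * U)"
    by (rule order_trans[OF sum_abs sum_mono]) (auto simp: abs_mult intro!: mult_left_mono ub)
  also have "\<dots> \<le> (\<Sum>j=0..2*m. \<bar>dd m j\<bar> * U)"
    using ub[of 0] unfolding Jm_def by (intro sum_mono2) auto
  also have "\<dots> = Gb m * U" by (simp add: Gb_def sum_distrib_right)
  finally show "\<bar>delta_m m u x y - c0 m * u x\<bar> \<le> Gb m * U" unfolding eq .
  assume ny: "norm y \<ge> \<rho> + norm x"
  have "u (x + (real m - real j) *\<^sub>R y) = 0" if j: "j \<in> Jm m" for j
  proof (rule supp)
    have "\<bar>real m - real j\<bar> \<ge> 1" using j by (auto simp: Jm_def)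
    then have "norm y \<le> norm ((real m - real j) *\<^sub>R y)" by (simp add: mult_le_cancel_right1)
    moreover have "norm ((real m - real j) *\<^sub>R y) \<le> norm (x + (real m - real j) *\<^sub>R y) + norm x"
      by (metis add.commute add_diff_cancel_left' norm_triangle_ineq4)
    ultimately show "norm (x + (real m - real j) *\<^sub>R y) \<ge> \<rho>" using ny by simp
  qed
  then show "delta_m m u x y - c0 m * u x = 0" unfolding eq by simp
qed

lemma num_bound:
  fixes \<sigma> :: "'a::euclidean_space measure" and u :: "'a \<Rightarrow> real"
  assumes sets: "sets \<sigma> = sets borel" and P: "prob_space \<sigma>" and sph: "emeasure \<sigma> (sphere 0 1) = 1"
    and m: "m \<ge> 1" and s: "0 < s" and sb: "4 * s < \<beta>" and b: "0 < \<beta>" "\<beta> \<le> 1"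
    and hol: "\<And>y z. \<bar>u y - u z\<bar> \<le> C * norm (y - z) powr \<beta>" and C: "C \<ge> 0"
    and ub: "\<And>z. \<bar>u z\<bar> \<le> U" and supp: "\<And>z. norm z \<ge> \<rho> \<Longrightarrow> u z = 0" and rho: "\<rho> \<ge> 0"
    and ucont: "continuous_on UNIV u"
  shows "\<bar>(\<integral>y. delta_m m u x y \<partial>nu_meas \<sigma> s) - c0 m * u x / (2 * s)\<bar>
           \<le> 2 * (Gb m * C * real m) / \<beta> + Gb m * U * (\<rho> + norm x + 1)"
proof -
  let ?\<nu> = "nu_meas \<sigma> s"
  define K1 where "K1 = Gb m * C * real m"
  define R where "R = \<rho> + norm x + 1"
  define A where "A = {y::'a. 1 \<le> norm y}"
  define h where "h y = delta_m m u x y - c0 m * u x * indicator A y" for y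
  define Hb where "Hb r = indicator {..1} r * (K1 * r powr \<beta>) + indicator {1..R} r * (Gb m * U)" for r :: real
  have U0: "U \<ge> 0" using ub[of 0] by simp
  have K10: "K1 \<ge> 0" using C Gb_nonneg[of m] by (simp add: K1_def)
  have GU0: "Gb m * U \<ge> 0" using U0 Gb_nonneg[of m] by simp
  have um[measurable]: "u \<in> borel_measurable borel" by (rule borel_measurable_continuous_onI[OF ucont])
  have dm[measurable]: "delta_m m u x \<in> borel_measurable borel" unfolding delta_m_def by measurable
  have Asets[measurable]: "A \<in> sets borel" unfolding A_def by measurable
  have hm[measurable]: "h \<in> borel_measurable borel" unfolding h_def[abs_def] by measurable
  have Hbm[measurable]: "Hb \<in> borel_measurable borel" unfolding Hb_def[abs_def] by measurable
  have Hb0: "Hb r \<ge> 0" for r using K10 GU0 by (simp add: Hb_def)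
  have pt: "\<bar>h y\<bar> \<le> Hb (norm y)" for y
  proof (cases "norm y < 1")
    case True
    then have "h y = delta_m m u x y" by (simp add: h_def A_def)
    then have "\<bar>h y\<bar> \<le> K1 * norm y powr \<beta>" using holder_small[OF hol C b m, where x=x and y=y] by (simp add: K1_def)
    then show ?thesis using True GU0 by (simp add: Hb_def)
  next
    case False
    then have hy: "h y = delta_m m u x y - c0 m * u x" by (simp add: h_def A_def)
    show ?thesis
    proof (cases "norm y \<le> R")
      case True
      then have "Hb (norm y) \<ge> Gb m * U" using False K10 by (simp add: Hb_def)
      then show ?thesis using large_part(1)[where u=u and U=U and \<rho>=\<rho> and m=m and x=x and y=y, OF ub supp] hy by simp
    next
      case nR: False
      then have "h y = 0" using large_part(2)[where u=u and U=U and \<rho>=\<rho> and m=m and x=x and y=y, OF ub supp] hy by (simp add: R_def)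
      then show ?thesis using Hb0 by simp
    qed
  qed
  have "(\<integral>\<^sup>+y. ennreal (norm (h y)) \<partial>?\<nu>) \<le> (\<integral>\<^sup>+y. ennreal (Hb (norm y)) \<partial>?\<nu>)"
    using pt by (intro nn_integral_mono ennreal_leI) simp
  also have "\<dots> = (\<integral>\<^sup>+r. wt s r * ennreal (Hb r) \<partial>lborel)"
    by (rule nu_radial[OF sets P sph]) measurable
  also have "\<dots> \<le> (\<integral>\<^sup>+r. ennreal K1 * (wt s r * indicator {..1} r * ennreal (r powr \<beta>)) + ennreal (Gb m * U) * indicator {1..R} r \<partial>lborel)"
  proof (rule nn_integral_mono)
    fix r :: real
    have w1: "wt s r * indicator {1..R} r \<le> indicator {1..R} r"
    proof (cases "1 \<le> r \<and> r \<le> R")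
      case True
      then have "r powr (-1 - 2 * s) \<le> 1" using s powr_mono[of "-1 - 2 * s" 0 r] by auto
      then show ?thesis using True by (simp add: wt_def)
    next
      case False then show ?thesis by (auto simp: indicator_def)
    qed
    have "wt s r * ennreal (Hb r) = ennreal K1 * (wt s r * indicator {..1} r * ennreal (r powr \<beta>)) + ennreal (Gb m * U) * (wt s r * indicator {1..R} r)"
      using K10 GU0 by (auto simp: Hb_def indicator_def ennreal_plus ennreal_mult' distrib_left mult_ac)
    also have "\<dots> \<le> ennreal K1 * (wt s r * indicator {..1} r * ennreal (r powr \<beta>)) + ennreal (Gb m * U) * indicator {1..R} r"
      using w1 by (intro add_mono mult_left_mono) auto
    finally show "wt s r * ennreal (Hb r) \<le> ennreal K1 * (wt s r * indicator {..1} r * ennreal (r powr \<beta>)) + ennreal (Gb m * U) * indicator {1..R} r" .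
  qed
  also have "\<dots> = ennreal K1 * (\<integral>\<^sup>+r. wt s r * indicator {..1} r * ennreal (r powr \<beta>) \<partial>lborel) + ennreal (Gb m * U) * emeasure lborel {1..R}"
    by (subst nn_integral_add) (auto simp: nn_integral_cmult)
  also have "\<dots> = ennreal (K1 * (1 / (\<beta> - 2 * s)) + Gb m * U * (R - 1))"
  proof -
    have bs: "\<beta> - 2 * s > 0" using sb s by simp
    have r4: "(\<integral>\<^sup>+r. wt s r * indicator {..1} r * ennreal (r powr \<beta>) \<partial>lborel) = ennreal (1 / (\<beta> - 2 * s))"
      using R4[of \<beta> s] bs by simp
    have R1: "R - 1 \<ge> 0" using rho by (simp add: R_def)
    have em: "emeasure lborel {1..R} = ennreal (R - 1)" using R1 by simp
    have i0: "1 / (\<beta> - 2 * s) \<ge> 0" using bs by simp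
    have x1: "ennreal K1 * ennreal (1 / (\<beta> - 2 * s)) = ennreal (K1 * (1 / (\<beta> - 2 * s)))"
      using K10 i0 by (rule ennreal_mult[symmetric])
    have x2: "ennreal (Gb m * U) * ennreal (R - 1) = ennreal (Gb m * U * (R - 1))"
      using GU0 R1 by (rule ennreal_mult[symmetric])
    have x3: "ennreal (K1 * (1 / (\<beta> - 2 * s))) + ennreal (Gb m * U * (R - 1)) = ennreal (K1 * (1 / (\<beta> - 2 * s)) + Gb m * U * (R - 1))"
      using K10 i0 GU0 R1 by (intro ennreal_plus[symmetric]) auto
    show ?thesis unfolding r4 em x1 x2 x3 ..
  qed
  finally have hb: "(\<integral>\<^sup>+y. ennreal (norm (h y)) \<partial>?\<nu>) \<le> ennreal (K1 * (1 / (\<beta> - 2 * s)) + Gb m * U * (R - 1))" .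
  have hm\<nu>: "h \<in> borel_measurable ?\<nu>" by (subst measurable_cong_sets[OF sets_nu refl]) simp
  have hint: "integrable ?\<nu> h" by (rule integrableI_bounded[OF hm\<nu>]) (use hb in \<open>simp add: le_less_trans\<close>)
  have AS: "A \<in> sets ?\<nu>" using Asets by (simp add: sets_nu)
  have Ameas: "emeasure ?\<nu> A = ennreal (1 / (2 * s))"
  proof -
    have "emeasure ?\<nu> A = (\<integral>\<^sup>+y. indicator A y \<partial>?\<nu>)"
      using nn_integral_indicator[OF AS] by simp
    also have "\<dots> = (\<integral>\<^sup>+y. indicator {1..} (norm y) \<partial>?\<nu>)"
      by (intro nn_integral_cong) (simp add: A_def indicator_def)
    also have "\<dots> = (\<integral>\<^sup>+r. wt s r * indicator {1..} r \<partial>lborel)"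
      by (rule nu_radial[OF sets P sph]) measurable
    also have "\<dots> = ennreal (1 / (2 * s))" by (rule R3[OF s])
    finally show ?thesis .
  qed
  have Aint: "integrable ?\<nu> (\<lambda>y. indicator A y :: real)"
    by (rule integrable_real_indicator) (use Ameas AS in auto)
  have "(\<integral>y. delta_m m u x y \<partial>?\<nu>) = (\<integral>y. c0 m * u x * indicator A y + h y \<partial>?\<nu>)"
    by (simp add: h_def)
  also have "\<dots> = c0 m * u x * measure ?\<nu> A + (\<integral>y. h y \<partial>?\<nu>)"
  proof -
    have sp: "space ?\<nu> = UNIV" using sets_eq_imp_space_eq[OF sets_nu[of \<sigma> s]] by simp
    show ?thesis using Aint hint sp by simp
  qed
  also have "measure ?\<nu> A = 1 / (2 * s)" using Ameas s by (simp add: measure_def)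
  finally have "(\<integral>y. delta_m m u x y \<partial>?\<nu>) - c0 m * u x / (2 * s) = (\<integral>y. h y \<partial>?\<nu>)" by simp
  then have "\<bar>(\<integral>y. delta_m m u x y \<partial>?\<nu>) - c0 m * u x / (2 * s)\<bar> = norm (\<integral>y. h y \<partial>?\<nu>)" by simp
  also have "\<dots> \<le> K1 * (1 / (\<beta> - 2 * s)) + Gb m * U * (R - 1)"
  proof -
    have "ennreal (norm (\<integral>y. h y \<partial>?\<nu>)) \<le> (\<integral>\<^sup>+y. ennreal (norm (h y)) \<partial>?\<nu>)"
      by (rule integral_norm_bound_ennreal[OF hint])
    also note hb
    finally show ?thesis using K10 GU0 sb s rho by (subst (asm) ennreal_le_iff) (auto simp: R_def)
  qed
  also have "\<dots> \<le> 2 * K1 / \<beta> + Gb m * U * R"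
  proof -
    have "1 / (\<beta> - 2 * s) \<le> 2 / \<beta>" using sb s b by (simp add: field_simps)
    then have "K1 * (1 / (\<beta> - 2 * s)) \<le> K1 * (2 / \<beta>)" using K10 by (rule mult_left_mono)
    moreover have "Gb m * U * (R - 1) \<le> Gb m * U * R" using GU0 by (simp add: mult_left_mono)
    moreover have "K1 * (2 / \<beta>) = 2 * K1 / \<beta>" by simp
    ultimately show ?thesis by linarith
  qed
  finally show ?thesis by (simp add: K1_def R_def)
qed



lemma M_lower:
  fixes \<sigma> :: "'a::euclidean_space measure"
  assumes sets: "sets \<sigma> = sets borel" and P: "prob_space \<sigma>" and sph: "emeasure \<sigma> (sphere 0 1) = 1"
    and s: "s > 0" and Mx: "\<And>e'. e' \<in> sphere 0 1 \<Longrightarrow> M_fun s \<sigma> e' \<le> Mx"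
    and U: "\<forall>\<theta>\<in>sphere (0::'a) 1. ennreal (1 - \<epsilon>) * emeasure lborel (ball (0::'a) 1) \<le> gB s \<theta>"
    and Mx0: "Mx \<ge> 0"
  shows "1 - \<epsilon> \<le> Mx"
proof -
  let ?B = "emeasure lborel (ball (0::'a) 1)"
  have "ennreal (1 - \<epsilon>) * ?B = (\<integral>\<^sup>+\<theta>. ennreal (1 - \<epsilon>) * ?B \<partial>\<sigma>)"
    using prob_space.emeasure_space_1[OF P] by simp
  also have "\<dots> \<le> (\<integral>\<^sup>+\<theta>. gB s \<theta> \<partial>\<sigma>)"
    using AE_sphere[OF sets P sph] U by (intro nn_integral_mono_AE) (auto elim: eventually_mono)
  also have "\<dots> \<le> ?B * ennreal Mx" by (rule tonelli_bound[OF sets P sph s Mx])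
  finally have le: "ennreal (1 - \<epsilon>) * ?B \<le> ?B * ennreal Mx" .
  obtain b where b: "?B = ennreal b" "b > 0" using lamB[where 'a='a]
    by (cases ?B) (auto simp: ennreal_less_iff)
  show ?thesis
  proof (cases "\<epsilon> \<ge> 1")
    case True then show ?thesis using Mx0 by simp
  next
    case False
    then have "ennreal ((1 - \<epsilon>) * b) \<le> ennreal (b * Mx)" using le b Mx0 by (simp add: ennreal_mult)
    then have "(1 - \<epsilon>) * b \<le> b * Mx" using b Mx0 by (simp add: ennreal_le_iff)
    then show ?thesis using b by (simp add: mult.commute)
  qed
qed

lemma M_lim:
  fixes m :: nat and \<sigma> :: "real \<Rightarrow> 'a::euclidean_space measure" and e :: "real \<Rightarrow> 'a"
  assumes m: "m \<ge> 1"
    and A2: "\<And>s. s \<in> {0<..<real m} \<Longrightarrow> sets (\<sigma> s) = sets borel \<and> prob_space (\<sigma> s)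
                                    \<and> emeasure (\<sigma> s) (sphere 0 1) = 1"
    and A3: "\<And>s. s \<in> {0<..<real m} \<Longrightarrow> e s \<in> sphere 0 1
           \<and> (\<forall>\<theta>\<in>sphere 0 1. M_fun s (\<sigma> s) \<theta> \<le> M_fun s (\<sigma> s) (e s))"
  shows "((\<lambda>s. M_fun s (\<sigma> s) (e s)) \<longlongrightarrow> 1) (at_right 0)"
proof (rule order_tendstoI)
  have ev: "eventually (\<lambda>s. s \<in> {0<..<real m}) (at_right 0)"
    using m by (auto simp: eventually_at_right_field intro!: exI[of _ "real m"])
  fix a :: real assume a: "a > 1"
  show "eventually (\<lambda>s. M_fun s (\<sigma> s) (e s) < a) (at_right 0)"
    using ev
  proof eventually_elim
    case (elim s)
    then show ?case using A2[OF elim] A3[OF elim] M_nn(2)[of "\<sigma> s" "e s" s] a by force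
  qed
next
  fix a :: real assume a: "a < 1"
  define \<epsilon> where "\<epsilon> = (1 - a) / 2"
  have eps: "\<epsilon> > 0" using a by (simp add: \<epsilon>_def)
  obtain \<delta> where d: "\<delta> > 0" and dU: "\<And>s. 0 < s \<and> s < \<delta> \<Longrightarrow> (\<forall>\<theta>::'a\<in>sphere 0 1.
           ennreal (1 - \<epsilon>) * emeasure lborel (ball (0::'a) 1) \<le> gB s \<theta>)"
    using unif[OF eps, where 'a='a] by blast
  have ev: "eventually (\<lambda>s. s \<in> {0<..<real m} \<and> s < \<delta>) (at_right 0)"
    using m d by (auto simp: eventually_at_right_field intro!: exI[of _ "min (real m) \<delta>"])
  show "eventually (\<lambda>s. a < M_fun s (\<sigma> s) (e s)) (at_right 0)"
    using ev
  proof eventually_elim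
    case (elim s)
    then have sm: "s \<in> {0<..<real m}" and s0: "s > 0" by auto
    note a2 = A2[OF sm] and a3 = A3[OF sm]
    have "1 - \<epsilon> \<le> M_fun s (\<sigma> s) (e s)"
    proof (rule M_lower[where \<sigma>="\<sigma> s" and s=s])
      show "M_fun s (\<sigma> s) (e s) \<ge> 0"
        using M_nn(3)[where \<sigma>="\<sigma> s" and e="e s" and s=s] a2 a3 s0 by force
    qed (use a2 a3 s0 dU elim in auto)
    moreover have "a < 1 - \<epsilon>" using a by (simp add: \<epsilon>_def field_simps)
    ultimately show ?case by linarith
  qed
qed

lemma L_formula:
  fixes \<sigma> :: "'a::euclidean_space measure" and e :: 'a
  assumes sets: "sets \<sigma> = sets borel" and P: "prob_space \<sigma>" and sph: "emeasure \<sigma> (sphere 0 1) = 1"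
    and s: "s > 0" and m: "m \<ge> 1" and e: "norm e = 1"
  shows "L_op m s \<sigma> e u x = (2 * s * (\<integral>y. delta_m m u x y \<partial>nu_meas \<sigma> s)) /
            (M_fun s \<sigma> e * (2 * s * enn2real (I2 s m)))"
proof -
  let ?D = "(\<integral>y. (1 - cos (e \<bullet> y)) ^ m \<partial>nu_meas \<sigma> s)"
  let ?N = "(\<integral>y. delta_m m u x y \<partial>nu_meas \<sigma> s)"
  let ?M = "M_fun s \<sigma> e"
  let ?V = "enn2real (I2 s m)"
  have meas: "(\<lambda>y. (1 - cos (e \<bullet> y)) ^ m) \<in> borel_measurable (nu_meas \<sigma> s)"
    by (subst measurable_cong_sets[OF sets_nu refl]) measurable
  have "?D = enn2real (\<integral>\<^sup>+y. ennreal ((1 - cos (e \<bullet> y)) ^ m) \<partial>nu_meas \<sigma> s)"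
    by (rule integral_eq_nn_integral[OF meas]) simp
  also have "(\<integral>\<^sup>+y. ennreal ((1 - cos (e \<bullet> y)) ^ m) \<partial>nu_meas \<sigma> s) = ennreal ?M * I1 s m"
    using denom_nn[OF sets P m, where e=e and s=s] M_nn(1)[OF sets P sph, where e=e and s=s] e s by simp
  finally have D: "?D = ?M * enn2real (I1 s m)"
    using M_nn(3)[OF sets P sph, where e=e and s=s] e s by (simp add: enn2real_mult)
  have V: "?V = 2 ^ m * enn2real (I1 s m)" by (simp add: I2_I1 enn2real_mult)
  have DV: "2 ^ m * ?D = ?M * ?V" unfolding D V by simp
  have "L_op m s \<sigma> e u x = 2 / (2 ^ m * ?D) / 2 * ?N" by (simp add: L_op_def c_const_def)
  also have "\<dots> = 2 / (?M * ?V) / 2 * ?N" by (simp only: DV)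
  also have "\<dots> = (2 * s * ?N) / (?M * (2 * s * ?V))"
    using s by (cases "?M * ?V = 0") (auto simp: field_simps)
  finally show ?thesis .
qed



lemma tendsto_by_bound:
  fixes f :: "real \<Rightarrow> real"
  assumes "eventually (\<lambda>s. \<bar>f s - a\<bar> \<le> g s) F" "(g \<longlongrightarrow> 0) F"
  shows "(f \<longlongrightarrow> a) F"
proof -
  have "((\<lambda>s. f s - a) \<longlongrightarrow> 0) F"
    by (rule Lim_null_comparison[OF _ assms(2)]) (use assms(1) in simp)
  then show ?thesis by (rule LIM_zero_cancel)
qed

lemma holder_cont:
  fixes u :: "'a::euclidean_space \<Rightarrow> real"
  assumes hol: "\<forall>y z. \<bar>u y - u z\<bar> \<le> C * norm (y - z) powr \<beta>" and b: "\<beta> > 0"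
  shows "continuous_on UNIV u"
proof (intro continuous_at_imp_continuous_on ballI)
  fix z :: 'a
  have t0: "((\<lambda>y. norm (y - z)) \<longlongrightarrow> 0) (at z)"
  proof -
    have "((\<lambda>y. y - z) \<longlongrightarrow> z - z) (at z)" by (intro tendsto_intros)
    then have "((\<lambda>y. y - z) \<longlongrightarrow> 0) (at z)" by simp
    then show ?thesis by (rule tendsto_norm_zero)
  qed
  have t1: "((\<lambda>y. norm (y - z) powr \<beta>) \<longlongrightarrow> 0) (at z)"
    by (rule tendsto_zero_powrI[OF t0 tendsto_const]) (use b in auto)
  have "((\<lambda>y. u y - u z) \<longlongrightarrow> 0) (at z)"
  proof (rule Lim_null_comparison[OF _ tendsto_mult_right_zero[OF t1, of C]])
    show "\<forall>\<^sub>F y in at z. norm (u y - u z) \<le> C * norm (y - z) powr \<beta>" using hol by simp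
  qed
  then show "isCont u z" unfolding isCont_def by (rule LIM_zero_cancel)
qed

theorem proposition3p8:
  fixes m :: nat and \<sigma> :: "real \<Rightarrow> 'a::euclidean_space measure" and e :: "real \<Rightarrow> 'a"
    and \<beta> :: real and u :: "'a \<Rightarrow> real" and x :: 'a
  assumes "m \<ge> 1"
    and "\<And>s. s \<in> {0<..<real m} \<Longrightarrow> sets (\<sigma> s) = sets borel \<and> prob_space (\<sigma> s)
                                    \<and> emeasure (\<sigma> s) (sphere 0 1) = 1"
    and "\<And>s. s \<in> {0<..<real m} \<Longrightarrow> e s \<in> sphere 0 1
           \<and> (\<forall>\<theta>\<in>sphere 0 1. M_fun s (\<sigma> s) \<theta> \<le> M_fun s (\<sigma> s) (e s))"
    and "0 < \<beta>" and "\<beta> < 1"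
    and "\<exists>C. \<forall>y z. \<bar>u y - u z\<bar> \<le> C * norm (y - z) powr \<beta>"
    and "\<exists>K. compact K \<and> (\<forall>y. y \<notin> K \<longrightarrow> u y = 0)"
  shows "((\<lambda>s. L_op m s (\<sigma> s) (e s) u x) \<longlongrightarrow> u x) (at_right 0)"
proof -
  note m = assms(1) and A2 = assms(2) and A3 = assms(3) and b0 = assms(4) and b1 = assms(5)
  from assms(6) obtain C where hol: "\<forall>y z. \<bar>u y - u z\<bar> \<le> C * norm (y - z) powr \<beta>" by blast
  have C0: "C \<ge> 0"
  proof -
    obtain b :: 'a where bB: "b \<in> Basis" using nonempty_Basis by blast
    have "\<bar>u b - u 0\<bar> \<le> C * norm (b - 0) powr \<beta>" using hol by blast
    then show ?thesis using bB by simp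
  qed
  have ucont: "continuous_on UNIV u" by (rule holder_cont[OF hol b0])
  from assms(7) obtain K where K: "compact K" "\<And>y. y \<notin> K \<Longrightarrow> u y = 0" by blast
  obtain \<rho>0 where \<rho>0: "\<And>z. z \<in> K \<Longrightarrow> norm z \<le> \<rho>0"
    using compact_imp_bounded[OF K(1)] unfolding bounded_iff by blast
  define \<rho> where "\<rho> = max 0 \<rho>0 + 1"
  have rho: "\<rho> \<ge> 0" by (simp add: \<rho>_def)
  have supp: "\<And>z. norm z \<ge> \<rho> \<Longrightarrow> u z = 0"
  proof -
    fix z :: 'a assume "norm z \<ge> \<rho>"
    then have "z \<notin> K" using \<rho>0[of z] by (auto simp: \<rho>_def)
    then show "u z = 0" by (rule K(2))
  qed
  obtain U0 where U0: "\<And>v. v \<in> u ` K \<Longrightarrow> norm v \<le> U0"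
    using compact_imp_bounded[OF compact_continuous_image[OF continuous_on_subset[OF ucont] K(1)]]
    unfolding bounded_iff by blast
  define U where "U = max 0 U0"
  have ub: "\<And>z. \<bar>u z\<bar> \<le> U"
  proof -
    fix z show "\<bar>u z\<bar> \<le> U"
      using U0[of "u z"] K(2)[of z] by (cases "z \<in> K") (auto simp: U_def)
  qed
  define Kn where "Kn = 2 * (Gb m * C * real m) / \<beta> + Gb m * U * (\<rho> + norm x + 1)"
  define Kd where "Kd = 1 + 2 * Gb m"
  define s1 where "s1 = min (real m) (min (\<beta> / 4) (1 / 2))"
  have s1: "s1 > 0" using m b0 by (simp add: s1_def)
  define N where "N s = (\<integral>y. delta_m m u x y \<partial>nu_meas (\<sigma> s) s)" for s
  define V where "V s = enn2real (I2 s m)" for s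
  define Mv where "Mv s = M_fun s (\<sigma> s) (e s)" for s
  have ev: "eventually (\<lambda>s. 0 < s \<and> s < s1) (at_right (0::real))"
    using s1 by (auto simp: eventually_at_right_field intro!: exI[of _ s1])
  have facts: "eventually (\<lambda>s. \<bar>2 * s * N s - c0 m * u x\<bar> \<le> 2 * s * Kn \<and>
       \<bar>2 * s * V s - c0 m\<bar> \<le> 2 * s * Kd \<and>
       L_op m s (\<sigma> s) (e s) u x = (2 * s * N s) / (Mv s * (2 * s * V s))) (at_right 0)"
    using ev
  proof eventually_elim
    case (elim s)
    then have sm: "s \<in> {0<..<real m}" and s0: "s > 0" and s4: "4 * s < \<beta>" and s2: "s \<le> 1/2"
      by (auto simp: s1_def)
    note a2 = A2[OF sm] and a3 = A3[OF sm]
    have "\<bar>N s - c0 m * u x / (2 * s)\<bar> \<le> Kn"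
      unfolding N_def Kn_def
      by (rule num_bound[where C=C and U=U and \<rho>=\<rho>]) (use a2 m s0 s4 b0 b1 hol C0 ub supp rho ucont in auto)
    then have "\<bar>2 * s * (N s - c0 m * u x / (2 * s))\<bar> \<le> 2 * s * Kn"
      using s0 by (simp add: abs_mult)
    then have f1: "\<bar>2 * s * N s - c0 m * u x\<bar> \<le> 2 * s * Kn"
      using s0 by (simp add: right_diff_distrib)
    obtain v where v: "I2 s m = ennreal v" "v \<ge> 0" "\<bar>v - c0 m / (2 * s)\<bar> \<le> 1 + 2 * Gb m"
      using I2_asymp[OF s0 s2 m] by blast
    have "V s = v" using v by (simp add: V_def)
    then have "\<bar>2 * s * (V s - c0 m / (2 * s))\<bar> \<le> 2 * s * Kd"
      using v s0 by (simp add: abs_mult Kd_def)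
    then have f2: "\<bar>2 * s * V s - c0 m\<bar> \<le> 2 * s * Kd"
      using s0 by (simp add: right_diff_distrib)
    have f3: "L_op m s (\<sigma> s) (e s) u x = (2 * s * N s) / (Mv s * (2 * s * V s))"
      unfolding N_def Mv_def V_def by (rule L_formula) (use a2 a3 s0 m in auto)
    show ?case using f1 f2 f3 by blast
  qed
  have z: "((\<lambda>s::real. 2 * s * K) \<longlongrightarrow> 0) (at_right 0)" for K :: real
  proof -
    have "((\<lambda>s::real. 2 * s * K) \<longlongrightarrow> 2 * 0 * K) (at_right 0)"
      by (intro tendsto_intros)
    then show ?thesis by simp
  qed
  have t1: "((\<lambda>s. 2 * s * N s) \<longlongrightarrow> c0 m * u x) (at_right 0)"
    by (rule tendsto_by_bound[OF _ z[of Kn]]) (use facts in \<open>auto elim: eventually_mono\<close>)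
  have t2: "((\<lambda>s. 2 * s * V s) \<longlongrightarrow> c0 m) (at_right 0)"
    by (rule tendsto_by_bound[OF _ z[of Kd]]) (use facts in \<open>auto elim: eventually_mono\<close>)
  have t3: "(Mv \<longlongrightarrow> 1) (at_right 0)"
    unfolding Mv_def by (rule M_lim[OF m A2 A3])
  have c0pos: "c0 m > 0" by (simp add: c0_def)
  have "((\<lambda>s. (2 * s * N s) / (Mv s * (2 * s * V s))) \<longlongrightarrow> (c0 m * u x) / (1 * c0 m)) (at_right 0)"
    by (rule tendsto_divide[OF t1 tendsto_mult[OF t3 t2]]) (use c0pos in simp)
  then have "((\<lambda>s. (2 * s * N s) / (Mv s * (2 * s * V s))) \<longlongrightarrow> u x) (at_right 0)"
    using c0pos by simp
  then show ?thesis
    by (rule Lim_transform_eventually) (use facts in \<open>auto elim: eventually_mono\<close>)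
qed


end
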